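(* Let $F=F(N,\mathcal D)$ be a connected GSC and let $x$ be a cut point of $F$. Then there exist $n_0\ge1$ and two distinct words $\omega,\tau\in\mathcal D^{n_0}\setminus\Omega_{n_0}(x)$ that are well separated by $x$.
   Context: GSC: $N\ge2$, $\mathcal D\subset\{0,\dots,N-1\}^2$ with $1<|\mathcal D|<N^2$, $\varphi_i(x)=\frac1N(x+i)$, $F$ the attractor $F=\bigcup_{i\in\mathcal D}\varphi_i(F)$; $\varphi_{i_1\cdots i_k}=\varphi_{i_1}\circ\cdots\circ\varphi_{i_k}$. For $x\in F$, $k\ge1$: $\Omega_k(x)=\{\mathbf i\in\mathcal D^k: x\in\varphi_{\mathbf i}(F)\}$ and $E_k(x)=\bigcup_{\mathbf j\in\mathcal D^k\setminus\Omega_k(x)}\varphi_{\mathbf j}(F)$. Words $\omega,\tau\in\mathcal D^n\setminus\Omega_n(x)$ are well separated by $x$ if for every $p\ge1$, $\varphi_\omega(F)$ and $\varphi_\tau(F)$ lie in different connected components of $E_{n+p}(x)$. *)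

theory Defs
  imports "HOL-Analysis.Analysis"
begin

definition gsc_digits :: "nat \<Rightarrow> (nat \<times> nat) set \<Rightarrow> bool" where
  "gsc_digits N D \<longleftrightarrow> N \<ge> 2 \<and> D \<subseteq> {0..<N} \<times> {0..<N} \<and> 1 < card D \<and> card D < N^2"

definition gsc_map :: "nat \<Rightarrow> nat \<times> nat \<Rightarrow> real \<times> real \<Rightarrow> real \<times> real" where
  "gsc_map N i x = (1 / real N) *\<^sub>R (x + (real (fst i), real (snd i)))"

definition gsc_attractor :: "nat \<Rightarrow> (nat \<times> nat) set \<Rightarrow> (real \<times> real) set \<Rightarrow> bool" where
  "gsc_attractor N D F \<longleftrightarrow> gsc_digits N D \<and> compact F \<and> F \<noteq> {} \<and>
     F = (\<Union>i\<in>D. gsc_map N i ` F)"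

definition word_map :: "nat \<Rightarrow> (nat \<times> nat) list \<Rightarrow> real \<times> real \<Rightarrow> real \<times> real" where
  "word_map N w = foldr (\<lambda>i f. gsc_map N i \<circ> f) w id"

definition words :: "(nat \<times> nat) set \<Rightarrow> nat \<Rightarrow> (nat \<times> nat) list set" where
  "words D k = {w. length w = k \<and> set w \<subseteq> D}"

definition Omega :: "nat \<Rightarrow> (nat \<times> nat) set \<Rightarrow> (real \<times> real) set \<Rightarrow> nat \<Rightarrow> real \<times> real
    \<Rightarrow> (nat \<times> nat) list set" where
  "Omega N D F k x = {w \<in> words D k. x \<in> word_map N w ` F}"

definition Eset :: "nat \<Rightarrow> (nat \<times> nat) set \<Rightarrow> (real \<times> real) set \<Rightarrow> nat \<Rightarrow> real \<times> real
    \<Rightarrow> (real \<times> real) set" where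
  "Eset N D F k x = (\<Union>w \<in> words D k - Omega N D F k x. word_map N w ` F)"

definition cut_point :: "(real \<times> real) set \<Rightarrow> real \<times> real \<Rightarrow> bool" where
  "cut_point F x \<longleftrightarrow> x \<in> F \<and> \<not> connected (F - {x})"

definition well_separated :: "nat \<Rightarrow> (nat \<times> nat) set \<Rightarrow> (real \<times> real) set \<Rightarrow> nat \<Rightarrow> real \<times> real
    \<Rightarrow> (nat \<times> nat) list \<Rightarrow> (nat \<times> nat) list \<Rightarrow> bool" where
  "well_separated N D F n x \<omega> \<tau> \<longleftrightarrow>
     \<omega> \<in> words D n - Omega N D F n x \<and> \<tau> \<in> words D n - Omega N D F n x \<and>
     (\<forall>p\<ge>1. \<exists>C1 \<in> components (Eset N D F (n + p) x). \<exists>C2 \<in> components (Eset N D F (n + p) x).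
        word_map N \<omega> ` F \<subseteq> C1 \<and> word_map N \<tau> ` F \<subseteq> C2 \<and> C1 \<noteq> C2)"

end

theory Submission
  imports Defs
begin

lemma wm_Nil: "word_map N [] = id" by (simp add: word_map_def)
lemma wm_Cons: "word_map N (i#w) = gsc_map N i \<circ> word_map N w" by (simp add: word_map_def)

lemma wm_append: "word_map N (w@v) = word_map N w \<circ> word_map N v"
  by (induction w) (auto simp: wm_Nil wm_Cons)

lemma wm_sub:
  assumes "gsc_attractor N D F" "set w \<subseteq> D"
  shows "word_map N w ` F \<subseteq> F"
  using assms(2)
proof (induction w)
  case Nil then show ?case by (simp add: wm_Nil)
next
  case (Cons i w)
  have "word_map N (i#w) ` F = gsc_map N i ` (word_map N w ` F)" by (simp add: wm_Cons image_comp)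
  also have "\<dots> \<subseteq> gsc_map N i ` F" using Cons by auto
  also have "\<dots> \<subseteq> F" using Cons.prems assms(1) unfolding gsc_attractor_def by auto
  finally show ?case .
qed

lemma wm_cover:
  assumes "gsc_attractor N D F" "y \<in> F"
  shows "\<exists>w. length w = p \<and> set w \<subseteq> D \<and> y \<in> word_map N w ` F"
  using assms(2)
proof (induction p arbitrary: y)
  case 0 then show ?case by (simp add: wm_Nil)
next
  case (Suc p)
  have "F = (\<Union>i\<in>D. gsc_map N i ` F)" using assms(1) unfolding gsc_attractor_def by auto
  with Suc.prems obtain i z where i: "i \<in> D" "z \<in> F" "y = gsc_map N i z" by blast
  from Suc.IH[OF i(2)] obtain w where w: "length w = p" "set w \<subseteq> D" "z \<in> word_map N w ` F" by blast
  show ?case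
    by (rule exI[of _ "i#w"]) (use i w in \<open>auto simp: wm_Cons image_comp\<close>)
qed

lemma gsc_map_dist: "dist (gsc_map N i a) (gsc_map N i b) = (1 / real N) * dist a b"
proof -
  have "gsc_map N i a - gsc_map N i b = (1 / real N) *\<^sub>R (a - b)"
    unfolding gsc_map_def by (simp add: algebra_simps)
  then show ?thesis by (simp add: dist_norm)
qed

lemma wm_dist: "dist (word_map N w a) (word_map N w b) = (1 / real N) ^ length w * dist a b"
  by (induction w) (simp_all add: wm_Nil wm_Cons gsc_map_dist)

lemma wm_cont: "continuous_on UNIV (word_map N w)"
proof (induction w)
  case Nil then show ?case by (simp add: wm_Nil)
next
  case (Cons i w)
  have "continuous_on UNIV (gsc_map N i)" unfolding gsc_map_def by (intro continuous_intros)
  then show ?case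
    using continuous_on_compose[OF Cons.IH continuous_on_subset[OF _ subset_UNIV]]
    by (simp add: wm_Cons)
qed

theorem mainTheorem17:
  fixes N :: nat and D :: "(nat \<times> nat) set" and F :: "(real \<times> real) set" and x :: "real \<times> real"
  assumes "gsc_attractor N D F"
    and "connected F"
    and "cut_point F x"
  shows "\<exists>n0\<ge>1. \<exists>\<omega> \<tau>. \<omega> \<in> words D n0 - Omega N D F n0 x \<and> \<tau> \<in> words D n0 - Omega N D F n0 x
           \<and> \<omega> \<noteq> \<tau> \<and> well_separated N D F n0 x \<omega> \<tau>"
proof -
  note A = assms(1)
  have N2: "N \<ge> 2" and cF: "compact F" using A unfolding gsc_attractor_def gsc_digits_def by auto
  have xF: "x \<in> F" and nc: "\<not> connected (F - {x})" using assms(3) unfolding cut_point_def by auto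
  obtain u v where uv: "u \<in> F - {x}" "v \<in> F - {x}" "\<not> connected_component (F - {x}) u v"
    using nc connected_iff_connected_component by blast
  define d where "d = diameter F"
  have bF: "bounded F" using cF compact_imp_bounded by blast
  have dd: "\<And>a b. a \<in> F \<Longrightarrow> b \<in> F \<Longrightarrow> dist a b \<le> d"
    unfolding d_def using diameter_bounded_bound[OF bF] by blast
  have d0: "d \<ge> 0" using dd[OF xF xF] by simp
  define r where "r = min (dist u x) (dist v x)"
  have r0: "r > 0" using uv unfolding r_def by auto
  obtain n where n: "(1 / real N) ^ n < r / (d + 1)"
    using real_arch_pow_inv[of "r / (d+1)" "1 / real N"] r0 d0 N2 by auto
  define n0 where "n0 = Suc n"
  have q0: "(1 / real N) ^ n0 \<le> (1 / real N) ^ n"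
    unfolding n0_def using N2 by (intro power_decreasing) auto
  have small: "(1 / real N) ^ n0 * d < r"
  proof -
    have "(1 / real N) ^ n0 * d \<le> (1 / real N) ^ n * (d + 1)"
      using q0 d0 by (intro mult_mono) auto
    also have "\<dots> < r" using n d0 by (simp add: field_simps)
    finally show ?thesis .
  qed
  have cell: "\<exists>w. length w = n0 \<and> set w \<subseteq> D \<and> z \<in> word_map N w ` F \<and> x \<notin> word_map N w ` F"
    if z: "z \<in> F - {x}" "r \<le> dist z x" for z
  proof -
    obtain w where w: "length w = n0" "set w \<subseteq> D" "z \<in> word_map N w ` F"
      using wm_cover[OF A, of z n0] z by auto
    have "x \<notin> word_map N w ` F"
    proof
      assume "x \<in> word_map N w ` F"
      then obtain b where b: "b \<in> F" "x = word_map N w b" by auto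
      obtain a where a: "a \<in> F" "z = word_map N w a" using w(3) by auto
      have "dist z x = (1 / real N) ^ n0 * dist a b" using a b w(1) wm_dist by simp
      also have "\<dots> \<le> (1 / real N) ^ n0 * d" using dd[OF a(1) b(1)] by (intro mult_left_mono) auto
      finally show False using small z(2) by simp
    qed
    then show ?thesis using w by blast
  qed
  have ru: "r \<le> dist u x" and rv: "r \<le> dist v x" unfolding r_def by auto
  obtain \<omega> where om: "length \<omega> = n0" "set \<omega> \<subseteq> D" "u \<in> word_map N \<omega> ` F" "x \<notin> word_map N \<omega> ` F"
    using cell[OF uv(1) ru] by blast
  obtain \<tau> where ta: "length \<tau> = n0" "set \<tau> \<subseteq> D" "v \<in> word_map N \<tau> ` F" "x \<notin> word_map N \<tau> ` F"
    using cell[OF uv(2) rv] by blast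
  have conn: "connected (word_map N w ` F)" for w
    using connected_continuous_image[OF continuous_on_subset[OF wm_cont] assms(2)] by blast
  have omS: "word_map N \<omega> ` F \<subseteq> F - {x}" using wm_sub[OF A om(2)] om(4) by blast
  have taS: "word_map N \<tau> ` F \<subseteq> F - {x}" using wm_sub[OF A ta(2)] ta(4) by blast
  have ne: "\<omega> \<noteq> \<tau>"
  proof
    assume "\<omega> = \<tau>"
    then have "connected_component (F - {x}) u v"
      unfolding connected_component_def using conn[of \<omega>] omS om(3) ta(3) by blast
    with uv(3) show False by blast
  qed
  have omW: "\<omega> \<in> words D n0 - Omega N D F n0 x" using om unfolding words_def Omega_def by auto
  have taW: "\<tau> \<in> words D n0 - Omega N D F n0 x" using ta unfolding words_def Omega_def by auto
  have inE: "word_map N w ` F \<subseteq> Eset N D F (n0 + p) x"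
    if w: "length w = n0" "set w \<subseteq> D" "x \<notin> word_map N w ` F" for w p
  proof
    fix y assume "y \<in> word_map N w ` F"
    then obtain z where z: "z \<in> F" "y = word_map N w z" by auto
    obtain j where j: "length j = p" "set j \<subseteq> D" "z \<in> word_map N j ` F"
      using wm_cover[OF A z(1)] by blast
    have eq: "word_map N (w @ j) ` F = word_map N w ` (word_map N j ` F)"
      by (simp add: wm_append image_comp)
    have "word_map N (w @ j) ` F \<subseteq> word_map N w ` F" unfolding eq using wm_sub[OF A j(2)] by blast
    then have "w @ j \<in> words D (n0 + p) - Omega N D F (n0 + p) x"
      using w j unfolding words_def Omega_def by auto
    moreover have "y \<in> word_map N (w @ j) ` F" unfolding eq using z j by auto
    ultimately show "y \<in> Eset N D F (n0 + p) x" unfolding Eset_def by blast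
  qed
  have Esub: "Eset N D F k x \<subseteq> F - {x}" for k
  proof
    fix y assume "y \<in> Eset N D F k x"
    then obtain w where w: "w \<in> words D k - Omega N D F k x" "y \<in> word_map N w ` F"
      unfolding Eset_def by blast
    have "set w \<subseteq> D" "x \<notin> word_map N w ` F" using w(1) unfolding words_def Omega_def by auto
    then show "y \<in> F - {x}" using wm_sub[OF A, of w] w(2) by blast
  qed
  have ws: "well_separated N D F n0 x \<omega> \<tau>"
    unfolding well_separated_def
  proof (intro conjI omW taW allI impI)
    fix p :: nat assume "p \<ge> 1"
    define E where "E = Eset N D F (n0 + p) x"
    have oE: "word_map N \<omega> ` F \<subseteq> E" unfolding E_def using inE om by blast
    have tE: "word_map N \<tau> ` F \<subseteq> E" unfolding E_def using inE ta by blast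
    have uE: "u \<in> E" and vE: "v \<in> E" using oE tE om(3) ta(3) by auto
    have neq: "connected_component_set E u \<noteq> connected_component_set E v"
    proof
      assume "connected_component_set E u = connected_component_set E v"
      then have "connected_component E u v" using vE connected_component_refl by fastforce
      then have "connected_component (F - {x}) u v"
        using connected_component_of_subset Esub unfolding E_def by blast
      with uv(3) show False by blast
    qed
    show "\<exists>C1\<in>components (Eset N D F (n0 + p) x). \<exists>C2\<in>components (Eset N D F (n0 + p) x).
          word_map N \<omega> ` F \<subseteq> C1 \<and> word_map N \<tau> ` F \<subseteq> C2 \<and> C1 \<noteq> C2"
      unfolding E_def[symmetric]
    proof (intro bexI conjI)
      show "word_map N \<omega> ` F \<subseteq> connected_component_set E u"
        by (rule connected_component_maximal[OF om(3) conn oE])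
      show "word_map N \<tau> ` F \<subseteq> connected_component_set E v"
        by (rule connected_component_maximal[OF ta(3) conn tE])
    qed (use componentsI[OF uE] componentsI[OF vE] neq in auto)
  qed
  have "n0 \<ge> 1" unfolding n0_def by simp
  then show ?thesis using omW taW ne ws by blast
qed

end
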